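(* Let $\alpha,\beta,p,n$ be positive integers with $p<\alpha\beta$ and $\beta\mid n$. Let $q=\lceil p/\beta\rceil$ and $r=p \bmod \beta\in\{1,\ldots,\beta\}$. Consider the code on cells $c_1,\ldots,c_n$, starting from the all-zero state, which on the $i$-th write ($i\ge1$) acts as follows: if $1\le i\bmod\alpha<q$, $n$ arbitrary information bits are written into all $n$ cells; if $i\bmod\alpha=q$, $rn/\beta$ arbitrary information bits are written into exactly the cells $c_j$ with $1\le j\bmod\beta\le r$, all other cells being left unchanged; if $i\bmod\alpha>q$, no information is written and no cell changes. Then this code is an $(\alpha,\beta,p)$-constrained code and its rate is $\frac{p}{\alpha\beta}$.
   Context: Convention: for positive integers $x,y$, $x \bmod y$ is taken in $\{1,\ldots,y\}$ (residue $0$ is represented by $y$). Memory cells are binary; there are $n$ cells and cell-state vectors lie in $\{0,1\}^n$. A code on $n$ cells consists, for each write $i\ge 1$, of a real $R_i\ge 0$, an encoder $\mathcal{E}_i:\{1,\ldots,\lfloor 2^{nR_i}\rfloor\}\times\{0,1\}^n\to\{0,1\}^n$ and a decoder $\mathcal{D}_i:\{0,1\}^n\to\{1,\ldots,\lfloor 2^{nR_i}\rfloor\}$ with $\mathcal{D}_i(\mathcal{E}_i(m,\mathbf{u}))=m$ (encoder and decoder may depend on $i$). Starting from $\mathbf{v}_0=\mathbf{0}$, messages $m_1,m_2,\ldots$ produce states $\mathbf{v}_i=\mathcal{E}_i(m_i,\mathbf{v}_{i-1})=(v_{i,1},\ldots,v_{i,n})$. The code is $(\alpha,\beta,p)$-constrained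 if for every message sequence, every $i\ge0$ and every $1\le j\le n-\beta+1$, $|\{(k,\ell): v_{i+k,j+\ell}\ne v_{i+k+1,j+\ell}, 0\le k<\alpha, 0\le\ell<\beta\}|\le p$. Its rate is $\lim_{m\to\infty}\frac1m\sum_{i=1}^m R_i$ (the number of information bits written per cell per write, averaged over writes). *)

theory Defs
  imports Complex_Main
begin

text \<open>Modulo convention of the paper: x mod y taken in {1..y}.\<close>
definition pmod :: "nat \<Rightarrow> nat \<Rightarrow> nat" where
  "pmod x y = (if x mod y = 0 then y else x mod y)"

text \<open>Cell-state vectors in {0,1}^n: cells are indexed 1..n, represented as
  functions nat => bool that are False outside {1..n}.\<close>
definition cellvecs :: "nat \<Rightarrow> (nat \<Rightarrow> bool) set" where
  "cellvecs n = {v. \<forall>j. j \<notin> {1..n} \<longrightarrow> \<not> v j}"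

definition zero_state :: "nat \<Rightarrow> bool" where
  "zero_state = (\<lambda>_. False)"

definition nmsgs :: "nat \<Rightarrow> real \<Rightarrow> nat" where
  "nmsgs n Ri = nat \<lfloor>(2::real) powr (real n * Ri)\<rfloor>"

definition is_code ::
  "nat \<Rightarrow> (nat \<Rightarrow> real) \<Rightarrow> (nat \<Rightarrow> nat \<Rightarrow> (nat \<Rightarrow> bool) \<Rightarrow> (nat \<Rightarrow> bool))
     \<Rightarrow> (nat \<Rightarrow> (nat \<Rightarrow> bool) \<Rightarrow> nat) \<Rightarrow> bool" where
  "is_code n R E D \<longleftrightarrow>
     (\<forall>i\<ge>1. R i \<ge> 0 \<and>
        (\<forall>m \<in> {1..nmsgs n (R i)}. \<forall>u \<in> cellvecs n.
            E i m u \<in> cellvecs n \<and> D i (E i m u) = m) \<and>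
        (\<forall>v \<in> cellvecs n. D i v \<in> {1..nmsgs n (R i)}))"

text \<open>Valid message sequences m_1, m_2, ... (index 0 unused).\<close>
definition valid_msgs :: "nat \<Rightarrow> (nat \<Rightarrow> real) \<Rightarrow> (nat \<Rightarrow> nat) \<Rightarrow> bool" where
  "valid_msgs n R ms \<longleftrightarrow> (\<forall>i\<ge>1. ms i \<in> {1..nmsgs n (R i)})"

fun states :: "(nat \<Rightarrow> nat \<Rightarrow> (nat \<Rightarrow> bool) \<Rightarrow> (nat \<Rightarrow> bool)) \<Rightarrow> (nat \<Rightarrow> nat)
     \<Rightarrow> nat \<Rightarrow> (nat \<Rightarrow> bool)" where
  "states E ms 0 = zero_state"
| "states E ms (Suc i) = E (Suc i) (ms (Suc i)) (states E ms i)"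

definition constrained ::
  "nat \<Rightarrow> nat \<Rightarrow> nat \<Rightarrow> nat \<Rightarrow> (nat \<Rightarrow> real)
     \<Rightarrow> (nat \<Rightarrow> nat \<Rightarrow> (nat \<Rightarrow> bool) \<Rightarrow> (nat \<Rightarrow> bool)) \<Rightarrow> bool" where
  "constrained \<alpha> \<beta> p n R E \<longleftrightarrow>
     (\<forall>ms. valid_msgs n R ms \<longrightarrow>
       (\<forall>i j. 1 \<le> j \<and> j + \<beta> \<le> n + 1 \<longrightarrow>
          card {(k, l). k < \<alpha> \<and> l < \<beta> \<and>
                  states E ms (i + k) (j + l) \<noteq> states E ms (i + k + 1) (j + l)} \<le> p))"

definition has_rate :: "(nat \<Rightarrow> real) \<Rightarrow> real \<Rightarrow> bool" where
  "has_rate R c \<longleftrightarrow> (\<lambda>m. (\<Sum>i=1..m. R i) / real m) \<longlonglongrightarrow> c"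

definition follows_scheme ::
  "nat \<Rightarrow> nat \<Rightarrow> nat \<Rightarrow> nat \<Rightarrow> (nat \<Rightarrow> real)
     \<Rightarrow> (nat \<Rightarrow> nat \<Rightarrow> (nat \<Rightarrow> bool) \<Rightarrow> (nat \<Rightarrow> bool)) \<Rightarrow> bool" where
  "follows_scheme \<alpha> \<beta> p n R E \<longleftrightarrow>
     (let q = nat \<lceil>real p / real \<beta>\<rceil>; r = pmod p \<beta> in
      \<forall>i\<ge>1.
        (pmod i \<alpha> < q \<longrightarrow> R i = 1) \<and>
        (pmod i \<alpha> = q \<longrightarrow> R i = real r / real \<beta> \<and>
           (\<forall>m \<in> {1..nmsgs n (R i)}. \<forall>u \<in> cellvecs n. \<forall>j \<in> {1..n}.
               \<not> (1 \<le> pmod j \<beta> \<and> pmod j \<beta> \<le> r) \<longrightarrow> E i m u j = u j)) \<and>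
        (pmod i \<alpha> > q \<longrightarrow> R i = 0 \<and>
           (\<forall>m \<in> {1..nmsgs n (R i)}. \<forall>u \<in> cellvecs n. E i m u = u)))"

end

theory Submission
  imports Defs
begin


lemma pmod_range: "a > 0 \<Longrightarrow> pmod x a \<in> {1..a}"
  unfolding pmod_def by auto

lemma pmod_inj:
  assumes "a > 0" shows "inj_on (\<lambda>k. pmod (m + k) a) {..<a}"
proof (rule inj_onI)
  fix x y assume x: "x \<in> {..<a}" and y: "y \<in> {..<a}" and e: "pmod (m + x) a = pmod (m + y) a"
  have me: "(m + x) mod a = (m + y) mod a"
    using e assms unfolding pmod_def by (metis mod_less_divisor less_irrefl)
  show "x = y"
  proof (cases "x \<le> y")
    case True
    then have "a dvd (m + y) - (m + x)" using me
        mod_eq_dvd_iff_nat[of "m + x" "m + y" a] by simp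
    then have "a dvd y - x" by simp
    moreover have "y - x < a" using y by auto
    ultimately have "y - x = 0" by (metis dvd_imp_le leD neq0_conv)
    then show ?thesis using True by simp
  next
    case False
    then have "a dvd (m + x) - (m + y)" using me
        mod_eq_dvd_iff_nat[of "m + y" "m + x" a] by simp
    then have "a dvd x - y" by simp
    moreover have "x - y < a" using x by auto
    ultimately have "x - y = 0" by (metis dvd_imp_le leD neq0_conv)
    then show ?thesis using False by simp
  qed
qed

lemma pmod_bij:
  assumes "a > 0" shows "bij_betw (\<lambda>k. pmod (m + k) a) {..<a} {1..a}"
proof -
  have "(\<lambda>k. pmod (m + k) a) ` {..<a} \<subseteq> {1..a}" using pmod_range[OF assms] by auto
  moreover have "card ((\<lambda>k. pmod (m + k) a) ` {..<a}) = card {1..a}"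
    using card_image[OF pmod_inj[OF assms]] by simp
  ultimately have "(\<lambda>k. pmod (m + k) a) ` {..<a} = {1..a}"
    by (simp add: card_subset_eq)
  then show ?thesis using pmod_inj[OF assms] by (simp add: bij_betw_def)
qed

lemma pmod_sum:
  assumes "a > 0" shows "(\<Sum>k<a. F (pmod (m + k) a)) = (\<Sum>v=1..a. (F v :: 'b::comm_monoid_add))"
  using sum.reindex_bij_betw[OF pmod_bij[OF assms], of F m] by simp

lemma card_pmod_le:
  assumes "b > 0" shows "card {l. l < b \<and> pmod (j + l) b \<le> r} \<le> r"
proof -
  have "card {l. l < b \<and> pmod (j + l) b \<le> r} \<le> card {1..r}"
  proof (rule card_inj_on_le)
    show "inj_on (\<lambda>l. pmod (j + l) b) {l. l < b \<and> pmod (j + l) b \<le> r}"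
      using pmod_inj[OF assms, of j] by (rule inj_on_subset) auto
    show "(\<lambda>l. pmod (j + l) b) ` {l. l < b \<and> pmod (j + l) b \<le> r} \<subseteq> {1..r}"
      using pmod_range[OF assms] by auto
  qed auto
  then show ?thesis by simp
qed

lemma qr_facts:
  fixes b p :: nat
  assumes "b > 0" "p > 0"
  defines "q \<equiv> nat \<lceil>real p / real b\<rceil>" and "r \<equiv> pmod p b"
  shows "1 \<le> q" "1 \<le> r" "r \<le> b" "(q - 1) * b + r = p"
proof -
  have r: "r \<in> {1..b}" using pmod_range[OF assms(1)] r_def by auto
  then show "1 \<le> r" "r \<le> b" by auto
  have key: "1 \<le> q \<and> (q - 1) * b + r = p"
  proof (cases "p mod b = 0")
    case True
    then have pe: "p = b * (p div b)" using div_mult_mod_eq[of p b] by (simp add: mult.commute)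
    then have "real p = real b * real (p div b)" by (metis of_nat_mult)
    then have "real p / real b = real (p div b)" using assms(1) by (simp add: field_simps)
    then have qd: "q = p div b" unfolding q_def by simp
    have rb: "r = b" using True r_def unfolding pmod_def by simp
    obtain d where d: "p div b = Suc d" using pe assms(2) by (cases "p div b") auto
    show ?thesis using qd d rb pe by (simp add: algebra_simps)
  next
    case False
    have "\<lceil>real p / real b\<rceil> = int (p div b) + 1"
    proof (rule ceiling_unique)
      have "real p = real b * real (p div b) + real (p mod b)"
        using div_mult_mod_eq[of p b] by (metis of_nat_add of_nat_mult mult.commute)
      moreover have "0 < p mod b" "p mod b < b" using False assms by auto
      ultimately show "of_int (int (p div b) + 1) - 1 < real p / real b"
        "real p / real b \<le> of_int (int (p div b) + 1)"
        using assms(1) by (auto simp: field_simps)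
    qed
    then have "q = p div b + 1" unfolding q_def by simp
    moreover have "r = p mod b" using False r_def unfolding pmod_def by simp
    ultimately show ?thesis by (auto simp: algebra_simps)
  qed
  then show "1 \<le> q" "(q - 1) * b + r = p" by auto
qed



definition gS :: "nat set \<Rightarrow> nat \<Rightarrow> nat set" where
  "gS S = (SOME g. bij_betw g {1..2 ^ card S} (Pow S))"

lemma gS_bij: "finite S \<Longrightarrow> bij_betw (gS S) {1..2 ^ card S} (Pow S)"
proof -
  assume f: "finite S"
  have "\<exists>g. bij_betw g {1..(2::nat) ^ card S} (Pow S)"
    using f by (subst bij_betw_iff_card) (auto simp: card_Pow)
  then show ?thesis unfolding gS_def by (rule someI_ex)
qed

definition enc :: "nat set \<Rightarrow> nat \<Rightarrow> (nat \<Rightarrow> bool) \<Rightarrow> (nat \<Rightarrow> bool)" where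
  "enc S m u = (\<lambda>j. if j \<in> S then j \<in> gS S m else u j)"

definition dec :: "nat set \<Rightarrow> (nat \<Rightarrow> bool) \<Rightarrow> nat" where
  "dec S v = inv_into {1..2 ^ card S} (gS S) {j \<in> S. v j}"

lemma enc_cellvecs: "S \<subseteq> {1..n} \<Longrightarrow> u \<in> cellvecs n \<Longrightarrow> enc S m u \<in> cellvecs n"
  unfolding enc_def cellvecs_def by auto

lemma dec_enc:
  assumes "finite S" "m \<in> {1..2 ^ card S}"
  shows "dec S (enc S m u) = m"
proof -
  have b: "bij_betw (gS S) {1..2 ^ card S} (Pow S)" using gS_bij[OF assms(1)] .
  then have "gS S m \<subseteq> S" using assms(2) bij_betwE by blast
  then have "{j \<in> S. enc S m u j} = gS S m" unfolding enc_def by auto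
  then show ?thesis unfolding dec_def using b assms(2)
    by (simp add: bij_betw_def inv_into_f_f)
qed

lemma dec_range:
  assumes "finite S" shows "dec S v \<in> {1..2 ^ card S}"
proof -
  have b: "bij_betw (gS S) {1..2 ^ card S} (Pow S)" using gS_bij[OF assms(1)] .
  have "{j \<in> S. v j} \<in> gS S ` {1..2 ^ card S}" using b by (auto simp: bij_betw_def)
  then show ?thesis unfolding dec_def by (rule inv_into_into)
qed

lemma sum_step:
  fixes x y :: "'a::comm_semiring_1"
  assumes q1: "1 \<le> q"
  shows "(\<Sum>v=1..a. (if v < q then x else if v = q then y else 0)) =
         (if a < q then of_nat a * x else of_nat (q - 1) * x + y)"
proof (induction a)
  case 0
  then show ?case using q1 by simp
next
  case (Suc a)
  define F where "F v = (if v < q then x else if v = q then y else 0)" for v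
  have e: "(\<Sum>v=1..Suc a. F v) = (\<Sum>v=1..a. F v) + F (Suc a)" by (simp add: sum.cl_ivl_Suc)
  have IH: "(\<Sum>v=1..a. F v) = (if a < q then of_nat a * x else of_nat (q - 1) * x + y)"
    using Suc.IH unfolding F_def .
  have "(\<Sum>v=1..Suc a. F v) = (if Suc a < q then of_nat (Suc a) * x else of_nat (q - 1) * x + y)"
  proof (cases "Suc a < q")
    case True then show ?thesis using e IH by (simp add: F_def algebra_simps)
  next
    case False
    show ?thesis
    proof (cases "Suc a = q")
      case True
      then have "a < q" "q - 1 = a" by auto
      then show ?thesis using e IH True by (simp add: F_def algebra_simps)
    next
      case False2: False
      then show ?thesis using e IH False by (simp add: F_def algebra_simps)
    qed
  qed
  then show ?case unfolding F_def .
qed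

lemma states_in:
  assumes "is_code n R E D" "valid_msgs n R ms"
  shows "states E ms k \<in> cellvecs n"
proof (induction k)
  case 0 then show ?case by (simp add: zero_state_def cellvecs_def)
next
  case (Suc k)
  then show ?case using assms unfolding is_code_def valid_msgs_def
    by (metis states.simps(2) le_add1 plus_1_eq_Suc)
qed



lemma pmod_mult_add: "0 < b \<Longrightarrow> 1 \<le> c \<Longrightarrow> c \<le> b \<Longrightarrow> pmod (b * a + c) b = c"
  unfolding pmod_def
  by (cases "c = b") (auto simp: add.commute)

lemma blocks_props:
  fixes \<beta> n r :: nat
  assumes "\<beta> > 0" "\<beta> dvd n" "1 \<le> r" "r \<le> \<beta>"
  defines "T \<equiv> (\<lambda>(a, c). \<beta> * a + c) ` ({..<n div \<beta>} \<times> {1..r})"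
  shows "T \<subseteq> {1..n}" "card T = (n div \<beta>) * r" "\<forall>j\<in>T. pmod j \<beta> \<le> r" "finite T"
proof -
  show "finite T" unfolding T_def by auto
  show "T \<subseteq> {1..n}"
  proof
    fix j assume "j \<in> T"
    then obtain a c where j: "j = \<beta> * a + c" "a < n div \<beta>" "1 \<le> c" "c \<le> r" unfolding T_def by auto
    have "Suc a \<le> n div \<beta>" using j by simp
    then have "\<beta> * Suc a \<le> \<beta> * (n div \<beta>)" by (rule mult_le_mono2)
    also have "\<dots> = n" using assms(2) by simp
    finally show "j \<in> {1..n}" using j assms by auto
  qed
  show "\<forall>j\<in>T. pmod j \<beta> \<le> r" unfolding T_def using assms pmod_mult_add by auto
  have inj: "inj_on (\<lambda>(a, c). \<beta> * a + c) ({..<n div \<beta>} \<times> {1..r})"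
  proof (rule inj_onI, clarify)
    fix a c a' c' assume h: "c \<in> {1..r}" "c' \<in> {1..r}" "\<beta> * a + c = \<beta> * a' + c'"
    have l1: "c - 1 < \<beta>" "c' - 1 < \<beta>" using h assms(4) by auto
    have e1: "(\<beta> * a + (c - 1)) div \<beta> = a" "(\<beta> * a + (c - 1)) mod \<beta> = c - 1"
      using l1 assms(1) by simp_all
    have e2: "(\<beta> * a' + (c' - 1)) div \<beta> = a'" "(\<beta> * a' + (c' - 1)) mod \<beta> = c' - 1"
      using l1 assms(1) by simp_all
    have eq: "\<beta> * a + (c - 1) = \<beta> * a' + (c' - 1)" using h by auto
    have "a = a'" using e1(1) e2(1) eq by metis
    moreover have "c - 1 = c' - 1" using e1(2) e2(2) eq by metis
    ultimately show "a = a' \<and> c = c'" using h by auto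
  qed
  show "card T = (n div \<beta>) * r" unfolding T_def using card_image[OF inj] by (simp add: card_cartesian_product)
qed

lemma pw2: "\<lfloor>(2::real) powr (real a * real b)\<rfloor> = 2 ^ (a * b)"
proof -
  have "(2::real) powr (real a * real b) = 2 powr real (a * b)" by (simp only: of_nat_mult)
  also have "\<dots> = 2 ^ (a * b)" by (rule powr_realpow) simp
  finally have "(2::real) powr (real a * real b) = 2 ^ (a * b)" .
  then have "\<lfloor>(2::real) powr (real a * real b)\<rfloor> = \<lfloor>(2::real) ^ (a * b)\<rfloor>" by (simp only:)
  also have "\<dots> = 2 ^ (a * b)" by (metis floor_of_int of_int_numeral of_int_power)
  finally show ?thesis .
qed

lemma nmsgs_nat: "nmsgs n (real k / real n) = 2 ^ k" if "n > 0" for n k :: nat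
  using that by (simp add: nmsgs_def powr_realpow)

lemma existence:
  fixes \<alpha> \<beta> p n :: nat
  assumes "\<alpha> > 0" "\<beta> > 0" "p > 0" "n > 0" "p < \<alpha> * \<beta>" "\<beta> dvd n"
  shows "\<exists>R E D. is_code n R E D \<and> follows_scheme \<alpha> \<beta> p n R E"
proof -
  define q where "q = nat \<lceil>real p / real \<beta>\<rceil>"
  define r where "r = pmod p \<beta>"
  have qr: "1 \<le> q" "1 \<le> r" "r \<le> \<beta>" "(q - 1) * \<beta> + r = p"
    using qr_facts[OF assms(2,3)] unfolding q_def r_def by auto
  define T where "T = (\<lambda>(a, c). \<beta> * a + c) ` ({..<n div \<beta>} \<times> {1..r})"
  note Tp = blocks_props[OF assms(2,6) qr(2,3), folded T_def]
  define Ss where "Ss i = (if pmod i \<alpha> < q then {1..n} else if pmod i \<alpha> = q then T else {})" for i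
  define R where "R i = (if pmod i \<alpha> < q then 1 else if pmod i \<alpha> = q then real r / real \<beta> else 0)" for i
  define E where "E i m u = enc (Ss i) m u" for i m u
  define D where "D i v = dec (Ss i) v" for i v
  have Ssub: "Ss i \<subseteq> {1..n}" for i using Tp unfolding Ss_def by auto
  have Sfin: "finite (Ss i)" for i using Tp unfolding Ss_def by auto
  have nm: "nmsgs n (R i) = 2 ^ card (Ss i)" for i
  proof -
    have "real r / real \<beta> = real ((n div \<beta>) * r) / real n"
      using assms(2,4,6) by (auto simp: field_simps elim!: dvdE)
    then have "real n * (real r / real \<beta>) = real (n div \<beta>) * real r" using assms(4) by simp
    then have m2: "nmsgs n (real r / real \<beta>) = 2 ^ ((n div \<beta>) * r)"
      unfolding nmsgs_def using pw2[of "n div \<beta>" r] by (simp only:) simp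
    have m1: "nmsgs n 1 = 2 ^ n" unfolding nmsgs_def using pw2[of n 1] by simp
    have m0: "nmsgs n 0 = 1" unfolding nmsgs_def by simp
    show ?thesis unfolding R_def Ss_def using Tp m0 m1 m2 by auto
  qed
  have "is_code n R E D"
    unfolding is_code_def
  proof (intro allI impI conjI ballI)
    fix i :: nat
    show "0 \<le> R i" unfolding R_def by auto
    fix m u assume "m \<in> {1..nmsgs n (R i)}" "u \<in> cellvecs n"
    then show "E i m u \<in> cellvecs n" "D i (E i m u) = m"
      unfolding E_def D_def using enc_cellvecs[OF Ssub] dec_enc[OF Sfin] nm by auto
  next
    fix i :: nat and v assume "v \<in> cellvecs n"
    show "D i v \<in> {1..nmsgs n (R i)}" unfolding D_def nm using dec_range[OF Sfin] .
  qed
  moreover have "follows_scheme \<alpha> \<beta> p n R E"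
    unfolding follows_scheme_def Let_def q_def[symmetric] r_def[symmetric]
  proof (intro allI impI conjI ballI)
    fix i :: nat
    show "pmod i \<alpha> < q \<Longrightarrow> R i = 1" unfolding R_def by simp
    show "pmod i \<alpha> = q \<Longrightarrow> R i = real r / real \<beta>" unfolding R_def by simp
    show "q < pmod i \<alpha> \<Longrightarrow> R i = 0" unfolding R_def by simp
    fix m u assume "q < pmod i \<alpha>"
    then show "E i m u = u" unfolding E_def Ss_def enc_def by auto
  next
    fix i m u j assume "pmod i \<alpha> = q" "\<not> (1 \<le> pmod j \<beta> \<and> pmod j \<beta> \<le> r)"
    moreover have "1 \<le> pmod j \<beta>" using pmod_range[OF assms(2)] by auto
    ultimately show "E i m u j = u j" unfolding E_def Ss_def enc_def using Tp by auto
  qed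
  ultimately show ?thesis by blast
qed



lemma constrained_part:
  fixes \<alpha> \<beta> p n :: nat
  assumes "\<alpha> > 0" "\<beta> > 0" "p > 0" "n > 0" "p < \<alpha> * \<beta>" "\<beta> dvd n"
    and code: "is_code n R E D" and fs: "follows_scheme \<alpha> \<beta> p n R E"
  shows "constrained \<alpha> \<beta> p n R E"
  unfolding constrained_def
proof (intro allI impI)
  define q where "q = nat \<lceil>real p / real \<beta>\<rceil>"
  define r where "r = pmod p \<beta>"
  have qr: "1 \<le> q" "1 \<le> r" "r \<le> \<beta>" "(q - 1) * \<beta> + r = p"
    using qr_facts[OF assms(2,3)] unfolding q_def r_def by auto
  have fs': "\<forall>i\<ge>1.
        (pmod i \<alpha> < q \<longrightarrow> R i = 1) \<and>
        (pmod i \<alpha> = q \<longrightarrow> R i = real r / real \<beta> \<and>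
           (\<forall>m \<in> {1..nmsgs n (R i)}. \<forall>u \<in> cellvecs n. \<forall>j \<in> {1..n}.
               \<not> (1 \<le> pmod j \<beta> \<and> pmod j \<beta> \<le> r) \<longrightarrow> E i m u j = u j)) \<and>
        (pmod i \<alpha> > q \<longrightarrow> R i = 0 \<and>
           (\<forall>m \<in> {1..nmsgs n (R i)}. \<forall>u \<in> cellvecs n. E i m u = u))"
    using fs unfolding follows_scheme_def Let_def q_def r_def by simp
  fix ms i j
  assume vm: "valid_msgs n R ms" and jj: "1 \<le> j \<and> j + \<beta> \<le> n + 1"
  define v where "v = states E ms"
  have vin: "v k \<in> cellvecs n" for k unfolding v_def using states_in[OF code vm] .
  have vs: "v (Suc k) = E (Suc k) (ms (Suc k)) (v k)" for k unfolding v_def by simp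
  have msin: "ms (Suc k) \<in> {1..nmsgs n (R (Suc k))}" for k using vm unfolding valid_msgs_def by simp
  define L where "L k = {l. l < \<beta> \<and> v (i + k) (j + l) \<noteq> v (i + k + 1) (j + l)}" for k
  define W where "W x = (if x < q then \<beta> else if x = q then r else 0)" for x
  have seteq: "{(k, l). k < \<alpha> \<and> l < \<beta> \<and> v (i + k) (j + l) \<noteq> v (i + k + 1) (j + l)}
      = Sigma {..<\<alpha>} L" unfolding L_def by auto
  have Lfin: "finite (L k)" for k unfolding L_def by auto
  have bound: "card (L k) \<le> W (pmod (Suc i + k) \<alpha>)" for k
  proof -
    define t where "t = Suc (i + k)"
    have t1: "t \<ge> 1" and tk: "Suc i + k = t" "i + k + 1 = t" unfolding t_def by auto
    have vt: "v t = E t (ms t) (v (i + k))" unfolding t_def by (rule vs)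
    have mt: "ms t \<in> {1..nmsgs n (R t)}" unfolding t_def by (rule msin)
    consider "pmod t \<alpha> < q" | "pmod t \<alpha> = q" | "pmod t \<alpha> > q" by linarith
    then show ?thesis
    proof cases
      case 1
      have "card (L k) \<le> card {..<\<beta>}" by (rule card_mono) (auto simp: L_def)
      then show ?thesis using 1 tk by (simp add: W_def)
    next
      case 2
      have "L k \<subseteq> {l. l < \<beta> \<and> pmod (j + l) \<beta> \<le> r}"
      proof
        fix l assume l: "l \<in> L k"
        then have lb: "l < \<beta>" and ne: "v (i + k) (j + l) \<noteq> v t (j + l)" unfolding L_def tk by auto
        have jl: "j + l \<in> {1..n}" using jj lb by auto
        have "1 \<le> pmod (j + l) \<beta>" using pmod_range[OF assms(2)] by auto
        moreover have "\<not> \<not> (1 \<le> pmod (j + l) \<beta> \<and> pmod (j + l) \<beta> \<le> r)"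
        proof
          assume "\<not> (1 \<le> pmod (j + l) \<beta> \<and> pmod (j + l) \<beta> \<le> r)"
          then have "E t (ms t) (v (i + k)) (j + l) = v (i + k) (j + l)"
            using fs' t1 2 mt vin jl by blast
          then show False using ne vt by simp
        qed
        ultimately show "l \<in> {l. l < \<beta> \<and> pmod (j + l) \<beta> \<le> r}" using lb by auto
      qed
      then have "card (L k) \<le> card {l. l < \<beta> \<and> pmod (j + l) \<beta> \<le> r}" by (rule card_mono[rotated]) auto
      also have "\<dots> \<le> r" by (rule card_pmod_le[OF assms(2)])
      finally show ?thesis using 2 tk by (simp add: W_def)
    next
      case 3
      have "E t (ms t) (v (i + k)) = v (i + k)" using fs' t1 3 mt vin by blast
      then have "L k = {}" unfolding L_def using vt tk by auto
      then show ?thesis by simp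
    qed
  qed
  have "card {(k, l). k < \<alpha> \<and> l < \<beta> \<and> v (i + k) (j + l) \<noteq> v (i + k + 1) (j + l)}
      = (\<Sum>k<\<alpha>. card (L k))" unfolding seteq using Lfin by (simp add: card_SigmaI)
  also have "\<dots> \<le> (\<Sum>k<\<alpha>. W (pmod (Suc i + k) \<alpha>))" by (rule sum_mono) (rule bound)
  also have "\<dots> = (\<Sum>x=1..\<alpha>. W x)" by (rule pmod_sum[OF assms(1)])
  also have "\<dots> = (q - 1) * \<beta> + r"
  proof -
    have "q \<le> \<alpha>"
    proof (rule ccontr)
      assume "\<not> q \<le> \<alpha>"
      then have "\<alpha> \<le> q - 1" by simp
      then have "\<alpha> * \<beta> \<le> (q - 1) * \<beta>" by (rule mult_le_mono1)
      then show False using qr(4) assms(5) by linarith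
    qed
    then show ?thesis unfolding W_def using sum_step[OF qr(1), where a=\<alpha> and x="\<beta>::nat" and y=r] by (simp add: mult.commute)
  qed
  also have "\<dots> = p" by (rule qr(4))
  finally show "card {(k, l). k < \<alpha> \<and> l < \<beta> \<and> states E ms (i + k) (j + l) \<noteq> states E ms (i + k + 1) (j + l)} \<le> p"
    unfolding v_def .
qed



lemma sum_shift1: "(\<Sum>i=1..m. f i) = (\<Sum>k<m. f (Suc k) :: real)"
  by (induction m) (auto simp: sum.cl_ivl_Suc)

lemma sum_split_add: "(\<Sum>k<(m::nat) + a. f k) = (\<Sum>k<m. f k) + (\<Sum>k<a. f (m + k) :: real)"
  by (induction a) auto

lemma rate_part:
  fixes \<alpha> \<beta> p n :: nat
  assumes "\<alpha> > 0" "\<beta> > 0" "p > 0" "n > 0" "p < \<alpha> * \<beta>" "\<beta> dvd n"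
    and fs: "follows_scheme \<alpha> \<beta> p n R E"
  shows "has_rate R (real p / real (\<alpha> * \<beta>))"
proof -
  define q where "q = nat \<lceil>real p / real \<beta>\<rceil>"
  define r where "r = pmod p \<beta>"
  have qr: "1 \<le> q" "1 \<le> r" "r \<le> \<beta>" "(q - 1) * \<beta> + r = p"
    using qr_facts[OF assms(2,3)] unfolding q_def r_def by auto
  have qa: "q \<le> \<alpha>"
  proof (rule ccontr)
    assume "\<not> q \<le> \<alpha>"
    then have "\<alpha> \<le> q - 1" by simp
    then have "\<alpha> * \<beta> \<le> (q - 1) * \<beta>" by (rule mult_le_mono1)
    then show False using qr(4) assms(5) by linarith
  qed
  define w where "w x = (if x < q then 1 else if x = q then real r / real \<beta> else 0)" for x
  have Rw: "R i = w (pmod i \<alpha>)" if "i \<ge> 1" for i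
    using fs that unfolding follows_scheme_def Let_def q_def[symmetric] r_def[symmetric] w_def
    by (cases "pmod i \<alpha> < q"; cases "pmod i \<alpha> = q") auto
  define c where "c = real p / real (\<alpha> * \<beta>)"
  define P where "P = real p / real \<beta>"
  have ac: "real \<alpha> * c = P" unfolding c_def P_def using assms(1) by (simp add: field_simps)
  define T where "T m = (\<Sum>k<m. R (Suc k))" for m
  have win: "T (m + \<alpha>) = T m + P" for m
  proof -
    have "T (m + \<alpha>) = T m + (\<Sum>k<\<alpha>. R (Suc (m + k)))" unfolding T_def by (rule sum_split_add)
    also have "(\<Sum>k<\<alpha>. R (Suc (m + k))) = (\<Sum>k<\<alpha>. w (pmod (Suc m + k) \<alpha>))"
      using Rw by simp
    also have "\<dots> = (\<Sum>x=1..\<alpha>. w x)" by (rule pmod_sum[OF assms(1)])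
    also have "\<dots> = real (q - 1) + real r / real \<beta>"
      unfolding w_def using sum_step[OF qr(1), where a=\<alpha> and x="1::real" and y="real r / real \<beta>"] qa
      by simp
    also have "\<dots> = P" unfolding P_def using qr(4) assms(2)
      by (simp add: field_simps) (metis of_nat_add of_nat_mult)
    finally show ?thesis .
  qed
  have per: "T (t * \<alpha> + s) = real t * P + T s" for t s
  proof (induction t)
    case 0 then show ?case by simp
  next
    case (Suc t)
    have "T (Suc t * \<alpha> + s) = T ((t * \<alpha> + s) + \<alpha>)" by (simp add: algebra_simps)
    also have "\<dots> = T (t * \<alpha> + s) + P" by (rule win)
    finally show ?case using Suc by (simp add: algebra_simps)
  qed
  define B where "B = (\<Sum>k<\<alpha>. \<bar>R (Suc k)\<bar>) + P"
  have eb: "\<bar>T m - real m * c\<bar> \<le> B" for m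
  proof -
    define s where "s = m mod \<alpha>"
    define t where "t = m div \<alpha>"
    have ms: "m = t * \<alpha> + s" unfolding s_def t_def by simp
    have sa: "s < \<alpha>" unfolding s_def using assms(1) by simp
    have "T m - real m * c = T s - real s * c"
      unfolding ms per using ac by (simp add: algebra_simps)
    also have "\<bar>\<dots>\<bar> \<le> \<bar>T s\<bar> + real s * c"
      using assms by (simp add: c_def abs_triangle_ineq4 order_trans[OF abs_triangle_ineq4])
    also have "\<bar>T s\<bar> \<le> (\<Sum>k<\<alpha>. \<bar>R (Suc k)\<bar>)"
    proof -
      have "\<bar>T s\<bar> \<le> (\<Sum>k<s. \<bar>R (Suc k)\<bar>)" unfolding T_def by (rule sum_abs)
      also have "\<dots> \<le> (\<Sum>k<\<alpha>. \<bar>R (Suc k)\<bar>)" by (rule sum_mono2) (use sa in auto)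
      finally show ?thesis .
    qed
    also have "real s * c \<le> real \<alpha> * c"
      using sa by (intro mult_right_mono) (auto simp: c_def)
    finally show ?thesis unfolding B_def ac by simp
  qed
  have lim0: "(\<lambda>m. (T m - real m * c) / real m) \<longlonglongrightarrow> 0"
  proof (rule tendsto_0_le[OF lim_inverse_n', where K=B])
    show "\<forall>\<^sub>F m in sequentially. norm ((T m - real m * c) / real m) \<le> norm (1 / real m) * B"
      using eb by (auto intro!: eventuallyI divide_right_mono simp: abs_divide)
  qed
  have "(\<lambda>m. c + (T m - real m * c) / real m) \<longlonglongrightarrow> c + 0"
    by (rule tendsto_add[OF tendsto_const lim0])
  then have lim1: "(\<lambda>m. c + (T m - real m * c) / real m) \<longlonglongrightarrow> c" by simp
  have ev: "\<forall>\<^sub>F m in sequentially. c + (T m - real m * c) / real m = (\<Sum>i=1..m. R i) / real m"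
    using eventually_gt_at_top[of 0]
  proof eventually_elim
    case (elim m)
    have ss: "(\<Sum>i=1..m. R i) = T m" unfolding T_def by (rule sum_shift1)
    show ?case unfolding ss using elim by (simp add: field_simps)
  qed
  show ?thesis unfolding has_rate_def c_def[symmetric]
    using Lim_transform_eventually[OF lim1 ev] .
qed


theorem theorem3:
  fixes \<alpha> \<beta> p n :: nat
  assumes "\<alpha> > 0" "\<beta> > 0" "p > 0" "n > 0" "p < \<alpha> * \<beta>" "\<beta> dvd n"
  shows "(\<exists>R E D. is_code n R E D \<and> follows_scheme \<alpha> \<beta> p n R E)
       \<and> (\<forall>R E D. is_code n R E D \<and> follows_scheme \<alpha> \<beta> p n R E \<longrightarrow>
             constrained \<alpha> \<beta> p n R E \<and> has_rate R (real p / real (\<alpha> * \<beta>)))"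
  using existence[OF assms] constrained_part[OF assms] rate_part[OF assms] by blast

end
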